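(* Let $q$ be a prime power and $n\ge2$. For $1\le d\le\lfloor n/2\rfloor$ let $\mathcal{M}_{q,d}$ be the largest size of a $d$-intersecting family in $\mathbb{G}_q(n,2d)$, and let $\mathcal{M}_q=\max_{1\le d\le\lfloor n/2\rfloor}\mathcal{M}_{q,d}$. If $\mathcal{U}\subseteq\mathbb{P}_q(n)$ is an equidistant linear code with constant distance $2d$, then $|\mathcal{U}|\le 2^{\lfloor\log_2(\mathcal{M}_{q,d}+1)\rfloor}$. In general, every equidistant linear code $\mathcal{U}\subseteq\mathbb{P}_q(n)$ satisfies $|\mathcal{U}|\le 2^{\lfloor\log_2(\mathcal{M}_q+1)\rfloor}$.
   Context: $\mathbb{P}_q(n)$ denotes the set of all subspaces of $\mathbb{F}_q^n$ and $\mathbb{G}_q(n,k)$ the set of $k$-dimensional subspaces. For subspaces $X,Y$ the subspace distance is $d_S(X,Y)=\dim X+\dim Y-2\dim(X\cap Y)$. A linear code in $\mathbb{P}_q(n)$ is a subset $\mathcal{U}\subseteq\mathbb{P}_q(n)$ with $\{0\}\in\mathcal{U}$ for which there exists a map $\boxplus:\mathcal{U}\times\mathcal{U}\to\mathcal{U}$ such that (i) $(\mathcal{U},\boxplus)$ is an abelian group; (ii) its identity element is $\{0\}$; (iii) $X\boxplus X=\{0\}$ for all $X\in\mathcal{U}$; (iv) $d_S(Y_1\boxplus X,Y_2\boxplus X)=d_S(Y_1,Y_2)$ for all $Y_1,Y_2,X\in\mathcal{U}$. It is equidistant with constant distance $r$ if $d_S(X,Y)=r$ for all distinct $X,Y\in\mathcal{U}$.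 A family $\mathcal{F}$ of subspaces is $\lambda$-intersecting if $\dim(X\cap Y)=\lambda$ for all distinct $X,Y\in\mathcal{F}$. *)

theory Defs
  imports "HOL-Analysis.Analysis"
begin

text \<open>Ambient space F_q^n is modelled as the type 'a ^ 'n with 'a a finite field
  (so q = CARD('a), a prime power) and n = CARD('n).\<close>

definition all_subspaces :: "('a::{field,finite} ^ 'n) set set" where
  "all_subspaces = {X. vec.subspace X}"

definition grass :: "nat \<Rightarrow> ('a::{field,finite} ^ 'n) set set" where
  "grass k = {X. vec.subspace X \<and> vec.dim X = k}"

definition subspace_dist :: "('a::{field,finite} ^ 'n) set \<Rightarrow> ('a ^ 'n) set \<Rightarrow> nat" where
  "subspace_dist X Y = vec.dim X + vec.dim Y - 2 * vec.dim (X \<inter> Y)"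

definition linear_code :: "('a::{field,finite} ^ 'n) set set \<Rightarrow> bool" where
  "linear_code U \<longleftrightarrow> U \<subseteq> all_subspaces \<and> {0} \<in> U \<and>
    (\<exists>f. (\<forall>X\<in>U. \<forall>Y\<in>U. f X Y \<in> U) \<and>
         (\<forall>X\<in>U. \<forall>Y\<in>U. \<forall>Z\<in>U. f (f X Y) Z = f X (f Y Z)) \<and>
         (\<forall>X\<in>U. \<forall>Y\<in>U. f X Y = f Y X) \<and>
         (\<forall>X\<in>U. f {0} X = X) \<and>
         (\<forall>X\<in>U. f X X = {0}) \<and>
         (\<forall>Y1\<in>U. \<forall>Y2\<in>U. \<forall>X\<in>U. subspace_dist (f Y1 X) (f Y2 X) = subspace_dist Y1 Y2))"

definition equidistant_with :: "('a::{field,finite} ^ 'n) set set \<Rightarrow> nat \<Rightarrow> bool" where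
  "equidistant_with U r \<longleftrightarrow> (\<forall>X\<in>U. \<forall>Y\<in>U. X \<noteq> Y \<longrightarrow> subspace_dist X Y = r)"

definition equidistant :: "('a::{field,finite} ^ 'n) set set \<Rightarrow> bool" where
  "equidistant U \<longleftrightarrow> (\<exists>r. equidistant_with U r)"

definition intersecting_family :: "nat \<Rightarrow> ('a::{field,finite} ^ 'n) set set \<Rightarrow> bool" where
  "intersecting_family lam F \<longleftrightarrow> (\<forall>X\<in>F. \<forall>Y\<in>F. X \<noteq> Y \<longrightarrow> vec.dim (X \<inter> Y) = lam)"

definition M_qd :: "'a::{field,finite} itself \<Rightarrow> 'n::finite itself \<Rightarrow> nat \<Rightarrow> nat" where
  "M_qd _ _ d = Max {card F | F :: ('a ^ 'n) set set. F \<subseteq> grass (2 * d) \<and> intersecting_family d F}"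

definition M_q :: "'a::{field,finite} itself \<Rightarrow> 'n::finite itself \<Rightarrow> nat" where
  "M_q a b = Max {M_qd a b d | d. 1 \<le> d \<and> d \<le> CARD('n) div 2}"

end

theory Submission
  imports Defs "HOL-Algebra.Sylow"
begin

lemma pow2_of_prime_factors:
  fixes n :: nat
  assumes "n > 0" "\<forall>p. prime p \<and> p dvd n \<longrightarrow> p = 2"
  shows "\<exists>k. n = 2^k"
  using assms
proof (induction n rule: less_induct)
  case (less n)
  show ?case
  proof (cases "n = 1")
    case True then show ?thesis by (intro exI[of _ 0]) simp
  next
    case False
    then obtain p where "prime p" "p dvd n" using prime_factor_nat by blast
    hence "2 dvd n" using less.prems by auto
    then obtain m where m: "n = 2*m" by blast
    have "m < n" "m > 0" using m less.prems(1) by auto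
    moreover have "\<forall>p. prime p \<and> p dvd m \<longrightarrow> p = 2" using less.prems(2) m by auto
    ultimately obtain k where "m = 2^k" using less.IH by blast
    then show ?thesis using m by (intro exI[of _ "Suc k"]) simp
  qed
qed

lemma bool_group_pow2:
  fixes U :: "'b set" and f :: "'b \<Rightarrow> 'b \<Rightarrow> 'b" and e :: 'b
  assumes fin: "finite U" and e: "e \<in> U"
    and cl: "\<And>x y. x \<in> U \<Longrightarrow> y \<in> U \<Longrightarrow> f x y \<in> U"
    and as: "\<And>x y z. x\<in>U \<Longrightarrow> y\<in>U \<Longrightarrow> z\<in>U \<Longrightarrow> f (f x y) z = f x (f y z)"
    and co: "\<And>x y. x\<in>U \<Longrightarrow> y\<in>U \<Longrightarrow> f x y = f y x"
    and idl: "\<And>x. x\<in>U \<Longrightarrow> f e x = x"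
    and inv: "\<And>x. x\<in>U \<Longrightarrow> f x x = e"
  shows "\<exists>k. card U = 2^k"
proof -
  define G where "G = \<lparr>carrier = U, monoid.mult = f, one = e\<rparr>"
  have cg: "comm_group G" unfolding G_def
    by (rule comm_groupI) (auto intro: cl e as co idl inv)
  then interpret comm_group G .
  have ord: "order G = card U" by (simp add: order_def G_def)
  have "\<forall>p. prime p \<and> p dvd card U \<longrightarrow> p = 2"
  proof (intro allI impI, elim conjE, rule ccontr)
    fix p :: nat assume p: "prime p" "p dvd card U" "p \<noteq> 2"
    obtain m where m: "card U = p * m" using p by blast
    have oG: "order G = p^1 * m" using m ord by simp
    have fG: "finite (carrier G)" using fin by (simp add: G_def)
    obtain H where H: "subgroup H G" "card H = p^1"
      using sylow_thm[OF p(1) is_group oG fG] by blast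
    have p2: "p \<ge> 2" using prime_ge_2_nat p(1) by blast
    have eH: "e \<in> H" using subgroup.one_closed[OF H(1)] by (simp add: G_def)
    have "card H \<ge> 2" using H p2 by simp
    then have "H - {e} \<noteq> {}"
      by (metis Diff_eq_empty_iff card.empty card_insert_if card_mono finite.emptyI
          finite.insertI not_less_eq_eq numeral_2_eq_2 subset_singletonD zero_le)
    then obtain h where h: "h \<in> H" "h \<noteq> e" by blast
    have hU: "h \<in> U" using h H(1) subgroup.subset by (fastforce simp: G_def)
    have invh: "inv\<^bsub>G\<^esub> h = h"
      using inv_equality[of h h] hU inv by (simp add: G_def)
    define K where "K = {e, h}"
    have sK: "subgroup K G"
    proof
      show "K \<subseteq> carrier G" using hU e by (simp add: K_def G_def)
      show "\<And>x y. x \<in> K \<Longrightarrow> y \<in> K \<Longrightarrow> x \<otimes>\<^bsub>G\<^esub> y \<in> K"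
        using idl[OF hU] idl[OF e] inv[OF hU] co[OF hU e] by (auto simp: K_def G_def)
      show "\<one>\<^bsub>G\<^esub> \<in> K" by (simp add: K_def G_def)
      show "\<And>x. x \<in> K \<Longrightarrow> inv\<^bsub>G\<^esub> x \<in> K"
      proof -
        have "\<one>\<^bsub>G\<^esub> = e" by (simp add: G_def)
        then have "inv\<^bsub>G\<^esub> e = e" using inv_one by metis
        then show "\<And>x. x \<in> K \<Longrightarrow> inv\<^bsub>G\<^esub> x \<in> K" using invh by (auto simp: K_def)
      qed
    qed
    have KH: "K \<subseteq> H" using eH h by (simp add: K_def)
    have s2: "subgroup K (G\<lparr>carrier := H\<rparr>)"
      by (rule subgroup_incl[OF sK H(1) KH])
    have gH: "group (G\<lparr>carrier := H\<rparr>)"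
      by (rule subgroup.subgroup_is_group[OF H(1) is_group])
    have "card (rcosets\<^bsub>G\<lparr>carrier := H\<rparr>\<^esub> K) * card K = order (G\<lparr>carrier := H\<rparr>)"
      by (rule group.lagrange[OF gH s2])
    also have "\<dots> = p" using H(2) by (simp add: order_def)
    finally have "2 dvd p" using h by (simp add: K_def) presburger
    then show False using p(1,3) unfolding prime_nat_iff by force
  qed
  moreover have "card U > 0" using fin e by (auto simp: card_gt_0_iff)
  ultimately show ?thesis using pow2_of_prime_factors by blast
qed


lemma floor_log_bound:
  fixes M k :: nat
  assumes "2^k \<le> M + 1"
  shows "(2::nat)^k \<le> 2 ^ nat \<lfloor>log 2 (real (M + 1))\<rfloor>"
proof -
  have a: "real (2^k) \<le> real (M+1)" using assms by (simp only: of_nat_le_iff)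
  have b: "(2::real) powr real k = real (2^k)" by (simp add: powr_realpow)
  have "real k \<le> log 2 (real (M + 1))"
    using le_log_iff[of 2 "real (M+1)" "real k"] a b by simp
  then have "int k \<le> \<lfloor>log 2 (real (M + 1))\<rfloor>" by (simp add: le_floor_iff)
  then have "k \<le> nat \<lfloor>log 2 (real (M + 1))\<rfloor>" by (simp add: le_nat_iff)
  then show ?thesis by (rule power_increasing) simp
qed

lemma finite_setset: "finite (X :: ('a::{field,finite} ^ 'n::finite) set set)"
  by (rule finite_subset[OF subset_UNIV]) simp

lemma M_qd_ge:
  fixes F :: "('a::{field,finite} ^ 'n::finite) set set"
  assumes "F \<subseteq> grass (2 * d)" "intersecting_family d F"
  shows "card F \<le> M_qd TYPE('a) TYPE('n) d"
proof -
  let ?S = "{card F | F :: ('a ^ 'n) set set. F \<subseteq> grass (2 * d) \<and> intersecting_family d F}"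
  have cb: "card G \<le> card (UNIV :: ('a ^ 'n) set set)" for G :: "('a ^ 'n) set set"
    by (rule card_mono) simp_all
  have "?S \<subseteq> {..card (UNIV :: ('a ^ 'n) set set)}"
    unfolding subset_iff atMost_iff using cb by blast
  then have "finite ?S" by (rule finite_subset) simp
  moreover have "card F \<in> ?S" using assms by blast
  ultimately show ?thesis unfolding M_qd_def by (rule Max_ge)
qed

lemma M_q_ge:
  assumes "1 \<le> d" "d \<le> CARD('n::finite) div 2"
  shows "M_qd TYPE('a::{field,finite}) TYPE('n) d \<le> M_q TYPE('a) TYPE('n)"
proof -
  let ?S = "{M_qd TYPE('a) TYPE('n) d | d. 1 \<le> d \<and> d \<le> CARD('n) div 2}"
  have "?S \<subseteq> (\<lambda>d. M_qd TYPE('a) TYPE('n) d) ` {1..CARD('n) div 2}" by auto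
  then have "finite ?S" by (rule finite_subset) simp
  moreover have "M_qd TYPE('a) TYPE('n) d \<in> ?S" using assms by blast
  ultimately show ?thesis unfolding M_q_def by (rule Max_ge)
qed

lemma dist_zero:
  fixes X :: "('a::{field,finite} ^ 'n::finite) set"
  assumes "vec.subspace X"
  shows "subspace_dist {0} X = vec.dim X"
proof -
  have "{0} \<inter> X = {0}" using vec.subspace_0[OF assms] by auto
  moreover have "vec.dim ({0} :: ('a ^ 'n) set) = 0" by (simp add: vec.dim_eq_0)
  ultimately show ?thesis by (simp add: subspace_dist_def)
qed

lemma dim_pos:
  fixes X :: "('a::{field,finite} ^ 'n::finite) set"
  assumes "vec.subspace X" "X \<noteq> {0}"
  shows "vec.dim X > 0"
  using assms vec.subspace_0[OF assms(1)] vec.dim_eq_0[of X] by auto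

lemma dim_le:
  fixes X :: "('a::{field,finite} ^ 'n::finite) set"
  shows "vec.dim X \<le> CARD('n)"
proof -
  have "vec.dim (UNIV :: ('a ^ 'n) set) = CARD('n)" by (rule vec_dim_card)
  moreover have "vec.dim X \<le> vec.dim (UNIV :: ('a ^ 'n) set)" by (rule vec.dim_subset) simp
  ultimately show ?thesis by linarith
qed

lemma lin_code_pow2:
  fixes U :: "('a::{field,finite} ^ 'n::finite) set set"
  assumes "linear_code U"
  shows "\<exists>k. card U = 2^k"
proof -
  have "\<exists>f. (\<forall>X\<in>U. \<forall>Y\<in>U. f X Y \<in> U) \<and>
         (\<forall>X\<in>U. \<forall>Y\<in>U. \<forall>Z\<in>U. f (f X Y) Z = f X (f Y Z)) \<and>
         (\<forall>X\<in>U. \<forall>Y\<in>U. f X Y = f Y X) \<and>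
         (\<forall>X\<in>U. f {0} X = X) \<and>
         (\<forall>X\<in>U. f X X = {0}) \<and>
         (\<forall>Y1\<in>U. \<forall>Y2\<in>U. \<forall>X\<in>U. subspace_dist (f Y1 X) (f Y2 X) = subspace_dist Y1 Y2)"
    using assms unfolding linear_code_def by (rule conjunct2[THEN conjunct2])
  then obtain f where fa: "(\<forall>X\<in>U. \<forall>Y\<in>U. f X Y \<in> U) \<and>
         (\<forall>X\<in>U. \<forall>Y\<in>U. \<forall>Z\<in>U. f (f X Y) Z = f X (f Y Z)) \<and>
         (\<forall>X\<in>U. \<forall>Y\<in>U. f X Y = f Y X) \<and>
         (\<forall>X\<in>U. f {0} X = X) \<and>
         (\<forall>X\<in>U. f X X = {0}) \<and>
         (\<forall>Y1\<in>U. \<forall>Y2\<in>U. \<forall>X\<in>U. subspace_dist (f Y1 X) (f Y2 X) = subspace_dist Y1 Y2)"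
    by (rule exE)
  note f = fa[THEN conjunct1] fa[THEN conjunct2, THEN conjunct1]
      fa[THEN conjunct2, THEN conjunct2, THEN conjunct1]
      fa[THEN conjunct2, THEN conjunct2, THEN conjunct2, THEN conjunct1]
      fa[THEN conjunct2, THEN conjunct2, THEN conjunct2, THEN conjunct2, THEN conjunct1]
  have z: "{0} \<in> U" using assms by (simp add: linear_code_def)
  show ?thesis
  proof (rule bool_group_pow2[of U "{0}" f, OF finite_setset z])
    show "\<And>x y. x \<in> U \<Longrightarrow> y \<in> U \<Longrightarrow> f x y \<in> U" using f(1) by blast
    show "\<And>x y z. x \<in> U \<Longrightarrow> y \<in> U \<Longrightarrow> z \<in> U \<Longrightarrow> f (f x y) z = f x (f y z)"
      using f(2) by blast
    show "\<And>x y. x \<in> U \<Longrightarrow> y \<in> U \<Longrightarrow> f x y = f y x" using f(3) by blast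
    show "\<And>x. x \<in> U \<Longrightarrow> f {0} x = x" using f(4) by blast
    show "\<And>x. x \<in> U \<Longrightarrow> f x x = {0}" using f(5) by blast
  qed
qed

lemma part1:
  fixes U :: "('a::{field,finite} ^ 'n::finite) set set"
  assumes "1 \<le> d" "linear_code U" "equidistant_with U (2 * d)"
  shows "card U \<le> 2 ^ nat \<lfloor>log 2 (real (M_qd TYPE('a) TYPE('n) d + 1))\<rfloor>"
proof -
  obtain k where k: "card U = 2^k" using lin_code_pow2[OF assms(2)] by blast
  have sub: "\<And>X. X \<in> U \<Longrightarrow> vec.subspace X" using assms(2)
    by (auto simp: linear_code_def all_subspaces_def)
  have z: "{0} \<in> U" using assms(2) by (simp add: linear_code_def)
  have dimX: "vec.dim X = 2 * d" if "X \<in> U" "X \<noteq> {0}" for X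
    using assms(3) z that dist_zero[OF sub[OF that(1)]] unfolding equidistant_with_def by metis
  let ?F = "U - {{0}}"
  have "?F \<subseteq> grass (2 * d)" using dimX sub by (auto simp: grass_def)
  moreover have "intersecting_family d ?F"
    unfolding intersecting_family_def
  proof (intro ballI impI)
    fix X Y assume XY: "X \<in> ?F" "Y \<in> ?F" "X \<noteq> Y"
    have "subspace_dist X Y = 2 * d" using assms(3) XY unfolding equidistant_with_def by auto
    then have "2*d + 2*d - 2 * vec.dim (X \<inter> Y) = 2 * d"
      using dimX XY by (simp add: subspace_dist_def)
    then show "vec.dim (X \<inter> Y) = d" using assms(1) by linarith
  qed
  ultimately have "card ?F \<le> M_qd TYPE('a) TYPE('n) d" by (rule M_qd_ge)
  moreover have "card ?F = card U - 1" using z finite_setset by simp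
  moreover have "card U \<ge> 1" using z finite_setset[of U] by (metis card_0_eq empty_iff less_one not_less)
  ultimately have "2^k \<le> M_qd TYPE('a) TYPE('n) d + 1" using k by linarith
  then show ?thesis using k floor_log_bound by metis
qed

lemma exists_grass2:
  assumes "CARD('n::finite) \<ge> 2"
  shows "\<exists>X::('a::{field,finite} ^ 'n) set. X \<in> grass 2"
proof -
  have "card (cart_basis :: ('a ^ 'n) set) = CARD('n)"
    using vec.dim_UNIV[where 'a='a and 'b='n] vec_dim_card[where 'a='a and 'n='n] by simp
  then obtain B :: "('a ^ 'n) set" where B: "B \<subseteq> cart_basis" "card B = 2"
    using assms by (metis obtain_subset_with_card_n)
  have ind: "vec.independent B" by (rule vec.independent_mono[OF independent_cart_basis B(1)])
  have "vec.span B \<in> grass 2"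
    unfolding grass_def using vec.subspace_span vec.dim_span_eq_card_independent[OF ind] B(2) by auto
  then show ?thesis by blast
qed

lemma bound_mono:
  fixes a b :: nat
  assumes "a \<le> b"
  shows "(2::nat) ^ nat \<lfloor>log 2 (real (a + 1))\<rfloor> \<le> 2 ^ nat \<lfloor>log 2 (real (b + 1))\<rfloor>"
proof -
  have "log 2 (real (a + 1)) \<le> log 2 (real (b + 1))" using assms by simp
  then have "\<lfloor>log 2 (real (a + 1))\<rfloor> \<le> \<lfloor>log 2 (real (b + 1))\<rfloor>" by (rule floor_mono)
  then show ?thesis by (intro power_increasing) auto
qed

theorem corollary2:
  assumes "CARD('n::finite) \<ge> 2"
  shows "(\<forall>(U :: ('a::{field,finite} ^ 'n) set set) d.
            1 \<le> d \<and> d \<le> CARD('n) div 2 \<and> linear_code U \<and> equidistant_with U (2 * d) \<longrightarrow>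
            card U \<le> 2 ^ nat \<lfloor>log 2 (real (M_qd TYPE('a) TYPE('n) d + 1))\<rfloor>)
       \<and> (\<forall>(U :: ('a ^ 'n) set set). linear_code U \<and> equidistant U \<longrightarrow>
            card U \<le> 2 ^ nat \<lfloor>log 2 (real (M_q TYPE('a) TYPE('n) + 1))\<rfloor>)"
proof -
  have P1: "\<forall>(U :: ('a ^ 'n) set set) d.
            1 \<le> d \<and> d \<le> CARD('n) div 2 \<and> linear_code U \<and> equidistant_with U (2 * d) \<longrightarrow>
            card U \<le> 2 ^ nat \<lfloor>log 2 (real (M_qd TYPE('a) TYPE('n) d + 1))\<rfloor>"
    using part1 by blast
  have P2: "card U \<le> 2 ^ nat \<lfloor>log 2 (real (M_q TYPE('a) TYPE('n) + 1))\<rfloor>"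
    if LU: "linear_code U" and EU: "equidistant U" for U :: "('a ^ 'n) set set"
  proof (cases "card U \<le> 1")
    case True
    moreover have "(1::nat) \<le> 2 ^ nat \<lfloor>log 2 (real (M_q TYPE('a) TYPE('n) + 1))\<rfloor>" by simp
    ultimately show ?thesis by linarith
  next
    case False
    obtain r where r: "equidistant_with U r" using EU by (auto simp: equidistant_def)
    have sub: "\<And>X. X \<in> U \<Longrightarrow> vec.subspace X" using LU
      by (auto simp: linear_code_def all_subspaces_def)
    have z: "{0} \<in> U" using LU by (simp add: linear_code_def)
    have dimr: "vec.dim X = r" if "X \<in> U" "X \<noteq> {0}" for X
      using r z that dist_zero[OF sub[OF that(1)]] unfolding equidistant_with_def by metis
    obtain X where X: "X \<in> U" "X \<noteq> {0}"
    proof -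
      have "\<not> U \<subseteq> {{0}}"
      proof
        assume "U \<subseteq> {{0}}"
        then have "card U \<le> card {{0::'a^'n}}" by (intro card_mono) auto
        then show False using False by simp
      qed
      then show ?thesis using that by blast
    qed
    have rpos: "r > 0" using dim_pos[OF sub[OF X(1)] X(2)] dimr[OF X] by simp
    show ?thesis
    proof (cases "\<exists>Y\<in>U. Y \<noteq> {0} \<and> Y \<noteq> X")
      case True
      then obtain Y where Y: "Y \<in> U" "Y \<noteq> {0}" "Y \<noteq> X" by blast
      have "subspace_dist X Y = r" using r X Y unfolding equidistant_with_def by auto
      then have "r + r - 2 * vec.dim (X \<inter> Y) = r"
        using dimr X Y by (simp add: subspace_dist_def)
      then have rd: "r = 2 * vec.dim (X \<inter> Y)" using rpos by linarith
      define d where "d = vec.dim (X \<inter> Y)"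
      have d1: "1 \<le> d" using rd rpos d_def by simp
      have "r \<le> CARD('n)" using dimr[OF X] dim_le[of X] by simp
      then have d2: "d \<le> CARD('n) div 2" using rd d_def by linarith
      have "equidistant_with U (2 * d)" using r rd d_def by simp
      then have "card U \<le> 2 ^ nat \<lfloor>log 2 (real (M_qd TYPE('a) TYPE('n) d + 1))\<rfloor>"
        using P1 d1 d2 LU by blast
      also have "\<dots> \<le> 2 ^ nat \<lfloor>log 2 (real (M_q TYPE('a) TYPE('n) + 1))\<rfloor>"
        by (rule bound_mono[OF M_q_ge[OF d1 d2]])
      finally show ?thesis .
    next
      case False
      then have "U \<subseteq> {{0}, X}" by blast
      then have "card U \<le> card {{0}, X}" by (intro card_mono) auto
      also have "\<dots> \<le> 2" by (simp add: card_insert_if)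
      finally have cU: "card U \<le> 2" .
      obtain W :: "('a ^ 'n) set" where W: "W \<in> grass 2" using exists_grass2[OF assms] by blast
      have "card {W} \<le> M_qd TYPE('a) TYPE('n) 1"
        by (rule M_qd_ge) (use W in \<open>auto simp: intersecting_family_def\<close>)
      moreover have "M_qd TYPE('a) TYPE('n) 1 \<le> M_q TYPE('a) TYPE('n)"
        by (rule M_q_ge) (use assms in linarith)+
      ultimately have "2^1 \<le> M_q TYPE('a) TYPE('n) + 1" by simp
      then have "(2::nat)^1 \<le> 2 ^ nat \<lfloor>log 2 (real (M_q TYPE('a) TYPE('n) + 1))\<rfloor>"
        by (rule floor_log_bound)
      then show ?thesis using cU by simp
    qed
  qed
  show ?thesis using P1 P2 by blast
qed

end
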